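(* Let $A\in\mathbb{R}^{m\times n}$ have full column rank $n$, $b\in\mathbb{R}^m$, $L\in\mathbb{R}^{n\times k}$ with $k\le n$, and let $g(A,b)=L^T(A^TA)^{-1}A^Tb$, which is Fréchet differentiable in a neighbourhood of $(A,b)$ with derivative $g'(A,b)$. Fix a matrix norm $\|\cdot\|_\ast$, which is either the Frobenius norm or the spectral norm. For $\alpha,\beta>0$ define $$\kappa_{g}(A,b;\alpha,\beta)=\max_{(\Delta A,\Delta b)\neq 0}\frac{\|g'(A,b).(\Delta A,\Delta b)\|_2}{\sqrt{\alpha^2\|\Delta A\|_\ast^2+\beta^2\|\Delta b\|_2^2}},$$ and define $\kappa_{g}(b)=\max_{\Delta b\neq0}\frac{\|\frac{\partial g}{\partial b}(A,b).\Delta b\|_2}{\|\Delta b\|_2}$ and $\kappa_{g}(A)=\max_{\Delta A\neq0}\frac{\|\frac{\partial g}{\partial A}(A,b).\Delta A\|_2}{\|\Delta A\|_\ast}$. Then for every fixed $\beta>0$, $$\lim_{\alpha\to+\infty}\kappa_g(A,b;\alpha,\beta)=\frac{1}{\beta}\kappa_g(b),$$ and for every fixed $\alpha>0$, $$\lim_{\beta\to+\infty}\kappa_g(A,b;\alpha,\beta)=\frac{1}{\alpha}\kappa_g(A).$$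
   Context: $\|\cdot\|_2$ is the Euclidean norm on vectors. $\frac{\partial g}{\partial A}(A,b)$ and $\frac{\partial g}{\partial b}(A,b)$ are the partial Fréchet derivatives of $g$, so that $g'(A,b).(\Delta A,\Delta b)=\frac{\partial g}{\partial A}(A,b).\Delta A+\frac{\partial g}{\partial b}(A,b).\Delta b$. *)

theory Defs
  imports "HOL-Analysis.Analysis"
begin

definition lsq_g :: "real^'k^'n \<Rightarrow> ((real^'n^'m) \<times> (real^'m)) \<Rightarrow> real^'k" where
  "lsq_g L = (\<lambda>(A, b). transpose L *v (matrix_inv (transpose A ** A) *v (transpose A *v b)))"

definition spectral_norm :: "real^'n^'m \<Rightarrow> real" where
  "spectral_norm M = onorm (\<lambda>x. M *v x)"

text \<open>Frobenius norm: the HOL-Analysis norm on real^'n^'m is exactly the Frobenius norm.\<close>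
definition frobenius_norm :: "real^'n^'m \<Rightarrow> real" where
  "frobenius_norm M = norm M"

text \<open>Mixed condition number kappa_g(A,b;alpha,beta), D being g'(A,b).\<close>
definition kappa_mixed ::
  "(real^'n^'m \<Rightarrow> real) \<Rightarrow> ((real^'n^'m) \<times> (real^'m) \<Rightarrow> real^'k) \<Rightarrow> real \<Rightarrow> real \<Rightarrow> real" where
  "kappa_mixed N D \<alpha> \<beta> =
     Sup {norm (D (dA, db)) / sqrt (\<alpha>\<^sup>2 * (N dA)\<^sup>2 + \<beta>\<^sup>2 * (norm db)\<^sup>2) | dA db. (dA, db) \<noteq> 0}"

text \<open>kappa_g(b), using the partial derivative dg/db . db = D (0, db).\<close>
definition kappa_b :: "((real^'n^'m) \<times> (real^'m) \<Rightarrow> real^'k) \<Rightarrow> real" where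
  "kappa_b D = Sup {norm (D (0, db)) / norm db | db. db \<noteq> 0}"

text \<open>kappa_g(A), using the partial derivative dg/dA . dA = D (dA, 0).\<close>
definition kappa_A ::
  "(real^'n^'m \<Rightarrow> real) \<Rightarrow> ((real^'n^'m) \<times> (real^'m) \<Rightarrow> real^'k) \<Rightarrow> real" where
  "kappa_A N D = Sup {norm (D (dA, 0)) / N dA | dA. dA \<noteq> 0}"

end

theory Submission
  imports Defs
begin

lemma spectral_bound:
  fixes M :: "real^'n^'m"
  shows "norm M \<le> real CARD('m) * real CARD('n) * spectral_norm M"
proof -
  have r: "norm (M$i) \<le> real CARD('n) * spectral_norm M" for i
  proof -
    have "norm (M$i) \<le> (\<Sum>j\<in>UNIV. \<bar>M$i$j\<bar>)" by (rule norm_le_l1_cart)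
    also have "\<dots> \<le> (\<Sum>j\<in>(UNIV::'n set). spectral_norm M)"
      by (rule sum_mono) (simp add: spectral_norm_def matrix_component_le_onorm)
    finally show ?thesis by simp
  qed
  have "norm M \<le> (\<Sum>i\<in>UNIV. norm (M$i))"
    by (simp add: norm_vec_def L2_set_le_sum)
  also have "\<dots> \<le> (\<Sum>i\<in>(UNIV::'m set). real CARD('n) * spectral_norm M)"
    by (rule sum_mono) (rule r)
  finally show ?thesis by simp
qed

lemma N_props:
  fixes N :: "real^'n^'m \<Rightarrow> real"
  assumes "N = frobenius_norm \<or> N = spectral_norm"
  shows "N 0 = 0 \<and> (\<exists>C>0. \<forall>x. norm x \<le> C * N x)"
  using assms
proof
  assume "N = frobenius_norm" then show ?thesis
    by (auto simp: frobenius_norm_def intro!: exI[of _ 1])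
next
  assume N: "N = spectral_norm"
  have "N 0 = 0" by (simp add: N spectral_norm_def onorm_zero)
  moreover have "real CARD('m) * real CARD('n) > 0" by simp
  ultimately show ?thesis using spectral_bound[where 'm='m and 'n='n] N by blast
qed

lemma cs_ineq:
  fixes pp qq uu vv :: real
  assumes "pp \<ge> 0" "qq \<ge> 0" "uu \<ge> 0" "vv \<ge> 0"
  shows "pp * uu + qq * vv \<le> sqrt (pp\<^sup>2 + qq\<^sup>2) * sqrt (uu\<^sup>2 + vv\<^sup>2)"
proof -
  have "(pp * uu + qq * vv)\<^sup>2 \<le> (pp\<^sup>2 + qq\<^sup>2) * (uu\<^sup>2 + vv\<^sup>2)"
    using sum_squares_ge_zero[of "pp * vv - qq * uu" 0]
    by (simp add: power2_eq_square algebra_simps)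
  then have "sqrt ((pp * uu + qq * vv)\<^sup>2) \<le> sqrt ((pp\<^sup>2 + qq\<^sup>2) * (uu\<^sup>2 + vv\<^sup>2))"
    by (rule real_sqrt_le_mono)
  then show ?thesis using assms by (simp add: real_sqrt_mult)
qed

theorem mainTheorem3:
  fixes A :: "real^'n^'m" and b :: "real^'m" and L :: "real^'k^'n"
    and N :: "real^'n^'m \<Rightarrow> real"
    and D :: "(real^'n^'m) \<times> (real^'m) \<Rightarrow> real^'k"
  assumes "rank A = CARD('n)"
    and "CARD('k) \<le> CARD('n)"
    and "(lsq_g L has_derivative D) (at (A, b))"
    and "N = frobenius_norm \<or> N = spectral_norm"
  shows "(\<forall>\<beta>>0. ((\<lambda>\<alpha>. kappa_mixed N D \<alpha> \<beta>) \<longlongrightarrow> kappa_b D / \<beta>) at_top)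
       \<and> (\<forall>\<alpha>>0. ((\<lambda>\<beta>. kappa_mixed N D \<alpha> \<beta>) \<longlongrightarrow> kappa_A N D / \<alpha>) at_top)"
proof -
  have bl: "bounded_linear D" using assms(3) by (rule has_derivative_bounded_linear)
  then interpret D: bounded_linear D .
  obtain B where B: "B > 0" "\<And>z. norm (D z) \<le> norm z * B" using D.pos_bounded by blast
  from N_props[OF assms(4)] obtain C where N0: "N 0 = 0" and C: "C > 0" "\<And>x. norm x \<le> C * N x"
    by blast
  have Nnn: "N x \<ge> 0" for x
  proof -
    have "0 \<le> C * N x" by (rule order_trans[OF norm_ge_zero C(2)])
    then show ?thesis using C(1) by (simp add: zero_le_mult_iff)
  qed
  have Npos: "N x > 0" if "x \<noteq> 0" for x
  proof -
    have "0 < C * N x" using that by (intro less_le_trans[OF _ C(2)]) simp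
    then show ?thesis using C(1) by (simp add: zero_less_mult_iff)
  qed
  have split: "D (x, y) = D (x, 0) + D (0, y)" for x y
    using D.add[of "(x,0)" "(0,y)"] by simp
  define KA where "KA = kappa_A N D"
  define Kb where "Kb = kappa_b D"
  have normxy: "norm (x::real^'n^'m, 0::real^'m) = norm x" "norm (0::real^'n^'m, y::real^'m) = norm y" for x y
    by (simp_all add: norm_Pair)
  let ?Sb = "{norm (D (0, db)) / norm db | db::real^'m. db \<noteq> 0}"
  have Sb_ne: "?Sb \<noteq> {}"
  proof -
    have "(1::real^'m) \<noteq> 0" by (simp add: vec_eq_iff)
    then show ?thesis by blast
  qed
  have Sb_bdd: "bdd_above ?Sb"
  proof (rule bdd_aboveI[of _ B], clarify)
    fix db :: "real^'m" assume "db \<noteq> 0"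
    then show "norm (D (0, db)) / norm db \<le> B"
      using B(2)[of "(0,db)"] by (simp add: normxy divide_le_eq mult.commute)
  qed
  have Kb_up: "norm (D (0, y)) \<le> Kb * norm y" for y
  proof (cases "y = 0")
    case True then show ?thesis using D.zero by (simp add: zero_prod_def[symmetric])
  next
    case False
    then have "norm (D (0, y)) / norm y \<le> Kb" unfolding Kb_def kappa_b_def
      by (intro cSup_upper Sb_bdd) blast
    then show ?thesis using False by (simp add: divide_le_eq)
  qed
  have Kb_nn: "Kb \<ge> 0"
  proof -
    obtain s where "s \<in> ?Sb" using Sb_ne by blast
    moreover have "s \<ge> 0" using calculation by auto
    ultimately show ?thesis unfolding Kb_def kappa_b_def using cSup_upper[OF _ Sb_bdd] by (meson order_trans)
  qed
  let ?SA = "{norm (D (dA, 0)) / N dA | dA::real^'n^'m. dA \<noteq> 0}"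
  have SA_ne: "?SA \<noteq> {}"
  proof -
    have "(1::real^'n^'m) \<noteq> 0" by (simp add: vec_eq_iff)
    then show ?thesis by blast
  qed
  have SA_bdd: "bdd_above ?SA"
  proof (rule bdd_aboveI[of _ "B*C"], clarify)
    fix dA :: "real^'n^'m" assume nz: "dA \<noteq> 0"
    have "norm (D (dA, 0)) \<le> norm dA * B" using B(2)[of "(dA,0)"] by (simp add: normxy)
    also have "\<dots> \<le> C * N dA * B" using C(2)[of dA] B(1) by (simp add: mult_right_mono)
    finally show "norm (D (dA, 0)) / N dA \<le> B * C"
      using Npos[OF nz] by (simp add: divide_le_eq algebra_simps)
  qed
  have KA_up: "norm (D (x, 0)) \<le> KA * N x" for x
  proof (cases "x = 0")
    case True then show ?thesis using D.zero by (simp add: zero_prod_def[symmetric] N0)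
  next
    case False
    then have "norm (D (x, 0)) / N x \<le> KA" unfolding KA_def kappa_A_def
      by (intro cSup_upper SA_bdd) blast
    then show ?thesis using Npos[OF False] by (simp add: divide_le_eq)
  qed
  have KA_nn: "KA \<ge> 0"
  proof -
    obtain s where "s \<in> ?SA" using SA_ne by blast
    moreover have "s \<ge> 0" using calculation Nnn by auto
    ultimately show ?thesis unfolding KA_def kappa_A_def using cSup_upper[OF _ SA_bdd] by (meson order_trans)
  qed
  have elem_le: "norm (D (x, y)) / sqrt (\<alpha>\<^sup>2 * (N x)\<^sup>2 + \<beta>\<^sup>2 * (norm y)\<^sup>2)
      \<le> sqrt ((KA/\<alpha>)\<^sup>2 + (Kb/\<beta>)\<^sup>2)"
    if ab: "\<alpha> > 0" "\<beta> > 0" and nz: "(x, y) \<noteq> 0" for \<alpha> \<beta> x y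
  proof -
    have dpos: "sqrt (\<alpha>\<^sup>2 * (N x)\<^sup>2 + \<beta>\<^sup>2 * (norm y)\<^sup>2) > 0"
    proof (cases "x = 0")
      case True then have "y \<noteq> 0" using nz by (simp add: zero_prod_def)
      then show ?thesis using ab by (simp add: add_nonneg_pos)
    next
      case False then show ?thesis using ab Npos[OF False] by (simp add: add_pos_nonneg)
    qed
    have "norm (D (x, y)) \<le> KA * N x + Kb * norm y"
      using split[of x y] norm_triangle_ineq[of "D (x,0)" "D (0,y)"] KA_up[of x] Kb_up[of y] by simp
    also have "\<dots> = (KA/\<alpha>) * (\<alpha> * N x) + (Kb/\<beta>) * (\<beta> * norm y)" using ab by simp
    also have "\<dots> \<le> sqrt ((KA/\<alpha>)\<^sup>2 + (Kb/\<beta>)\<^sup>2) * sqrt ((\<alpha> * N x)\<^sup>2 + (\<beta> * norm y)\<^sup>2)"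
      by (rule cs_ineq) (use ab KA_nn Kb_nn Nnn in auto)
    also have "\<dots> = sqrt ((KA/\<alpha>)\<^sup>2 + (Kb/\<beta>)\<^sup>2) * sqrt (\<alpha>\<^sup>2 * (N x)\<^sup>2 + \<beta>\<^sup>2 * (norm y)\<^sup>2)"
      by (simp add: power_mult_distrib)
    finally show ?thesis using dpos by (simp add: divide_le_eq)
  qed
  let ?SM = "\<lambda>\<alpha> \<beta>. {norm (D (dA, db)) / sqrt (\<alpha>\<^sup>2 * (N dA)\<^sup>2 + \<beta>\<^sup>2 * (norm db)\<^sup>2) | dA db. (dA, db) \<noteq> 0}"
  have SM_ne: "?SM \<alpha> \<beta> \<noteq> {}" for \<alpha> \<beta>
  proof -
    have "((0::real^'n^'m), (1::real^'m)) \<noteq> 0" by (simp add: vec_eq_iff zero_prod_def)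
    then show ?thesis by blast
  qed
  have SM_bdd: "bdd_above (?SM \<alpha> \<beta>)" if "\<alpha> > 0" "\<beta> > 0" for \<alpha> \<beta>
    by (rule bdd_aboveI[of _ "sqrt ((KA/\<alpha>)\<^sup>2 + (Kb/\<beta>)\<^sup>2)"]) (use elem_le that in blast)
  have up: "kappa_mixed N D \<alpha> \<beta> \<le> sqrt ((KA/\<alpha>)\<^sup>2 + (Kb/\<beta>)\<^sup>2)" if "\<alpha> > 0" "\<beta> > 0" for \<alpha> \<beta>
    unfolding kappa_mixed_def by (rule cSup_least[OF SM_ne]) (use elem_le that in blast)
  have lowb: "Kb / \<beta> \<le> kappa_mixed N D \<alpha> \<beta>" if ab: "\<alpha> > 0" "\<beta> > 0" for \<alpha> \<beta>
  proof -
    have "Kb \<le> \<beta> * kappa_mixed N D \<alpha> \<beta>" unfolding Kb_def kappa_b_def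
    proof (rule cSup_least[OF Sb_ne], clarify)
      fix db :: "real^'m" assume nz: "db \<noteq> 0"
      have "((0::real^'n^'m), db) \<noteq> 0" using nz by (simp add: zero_prod_def)
      then have "norm (D (0, db)) / sqrt (\<alpha>\<^sup>2 * (N 0)\<^sup>2 + \<beta>\<^sup>2 * (norm db)\<^sup>2) \<le> kappa_mixed N D \<alpha> \<beta>"
        unfolding kappa_mixed_def by (intro cSup_upper SM_bdd ab) blast
      moreover have "sqrt (\<alpha>\<^sup>2 * (N 0)\<^sup>2 + \<beta>\<^sup>2 * (norm db)\<^sup>2) = \<beta> * norm db"
        using ab N0 by (simp add: real_sqrt_mult)
      ultimately show "norm (D (0, db)) / norm db \<le> \<beta> * kappa_mixed N D \<alpha> \<beta>"
        using ab nz by (simp add: divide_le_eq field_simps)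
    qed
    then show ?thesis using ab by (simp add: divide_le_eq mult.commute)
  qed
  have lowA: "KA / \<alpha> \<le> kappa_mixed N D \<alpha> \<beta>" if ab: "\<alpha> > 0" "\<beta> > 0" for \<alpha> \<beta>
  proof -
    have "KA \<le> \<alpha> * kappa_mixed N D \<alpha> \<beta>" unfolding KA_def kappa_A_def
    proof (rule cSup_least[OF SA_ne], clarify)
      fix dA :: "real^'n^'m" assume nz: "dA \<noteq> 0"
      have "(dA, (0::real^'m)) \<noteq> 0" using nz by (simp add: zero_prod_def)
      then have "norm (D (dA, 0)) / sqrt (\<alpha>\<^sup>2 * (N dA)\<^sup>2 + \<beta>\<^sup>2 * (norm (0::real^'m))\<^sup>2) \<le> kappa_mixed N D \<alpha> \<beta>"
        unfolding kappa_mixed_def by (intro cSup_upper SM_bdd ab) blast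
      moreover have "sqrt (\<alpha>\<^sup>2 * (N dA)\<^sup>2 + \<beta>\<^sup>2 * (norm (0::real^'m))\<^sup>2) = \<alpha> * N dA"
        using ab Nnn[of dA] by (simp add: real_sqrt_mult)
      ultimately show "norm (D (dA, 0)) / N dA \<le> \<alpha> * kappa_mixed N D \<alpha> \<beta>"
        using ab Npos[OF nz] by (simp add: divide_le_eq field_simps)
    qed
    then show ?thesis using ab by (simp add: divide_le_eq mult.commute)
  qed
  have part1: "((\<lambda>\<alpha>. kappa_mixed N D \<alpha> \<beta>) \<longlongrightarrow> Kb / \<beta>) at_top" if b: "\<beta> > 0" for \<beta>
  proof (rule tendsto_sandwich[of "\<lambda>_. Kb/\<beta>" _ _ "\<lambda>\<alpha>. sqrt ((KA/\<alpha>)\<^sup>2 + (Kb/\<beta>)\<^sup>2)"])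
    show "\<forall>\<^sub>F \<alpha> in at_top. Kb/\<beta> \<le> kappa_mixed N D \<alpha> \<beta>"
      using eventually_gt_at_top[of 0] by eventually_elim (use lowb b in auto)
    show "\<forall>\<^sub>F \<alpha> in at_top. kappa_mixed N D \<alpha> \<beta> \<le> sqrt ((KA/\<alpha>)\<^sup>2 + (Kb/\<beta>)\<^sup>2)"
      using eventually_gt_at_top[of 0] by eventually_elim (use up b in auto)
    have "((\<lambda>\<alpha>. sqrt ((KA/\<alpha>)\<^sup>2 + (Kb/\<beta>)\<^sup>2)) \<longlongrightarrow> sqrt (0\<^sup>2 + (Kb/\<beta>)\<^sup>2)) at_top"
      by (intro tendsto_intros tendsto_divide_0[OF tendsto_const] filterlim_ident filterlim_at_top_imp_at_infinity)
    then show "((\<lambda>\<alpha>. sqrt ((KA/\<alpha>)\<^sup>2 + (Kb/\<beta>)\<^sup>2)) \<longlongrightarrow> Kb/\<beta>) at_top"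
      using Kb_nn b by simp
  qed simp
  have part2: "((\<lambda>\<beta>. kappa_mixed N D \<alpha> \<beta>) \<longlongrightarrow> KA / \<alpha>) at_top" if a: "\<alpha> > 0" for \<alpha>
  proof (rule tendsto_sandwich[of "\<lambda>_. KA/\<alpha>" _ _ "\<lambda>\<beta>. sqrt ((KA/\<alpha>)\<^sup>2 + (Kb/\<beta>)\<^sup>2)"])
    show "\<forall>\<^sub>F \<beta> in at_top. KA/\<alpha> \<le> kappa_mixed N D \<alpha> \<beta>"
      using eventually_gt_at_top[of 0] by eventually_elim (use lowA a in auto)
    show "\<forall>\<^sub>F \<beta> in at_top. kappa_mixed N D \<alpha> \<beta> \<le> sqrt ((KA/\<alpha>)\<^sup>2 + (Kb/\<beta>)\<^sup>2)"
      using eventually_gt_at_top[of 0] by eventually_elim (use up a in auto)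
    have "((\<lambda>\<beta>. sqrt ((KA/\<alpha>)\<^sup>2 + (Kb/\<beta>)\<^sup>2)) \<longlongrightarrow> sqrt ((KA/\<alpha>)\<^sup>2 + 0\<^sup>2)) at_top"
      by (intro tendsto_intros tendsto_divide_0[OF tendsto_const] filterlim_ident filterlim_at_top_imp_at_infinity)
    then show "((\<lambda>\<beta>. sqrt ((KA/\<alpha>)\<^sup>2 + (Kb/\<beta>)\<^sup>2)) \<longlongrightarrow> KA/\<alpha>) at_top"
      using KA_nn a by simp
  qed simp
  show ?thesis using part1 part2 unfolding KA_def Kb_def by blast
qed

end
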